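(* Let $g:[0,1)\to\mathbb{R}$ be the function defined in the context. Then $g$ attains its maximum on $[0,1)$, i.e. there exists $a^*\in[0,1)$ with $g(a^* )=\sup_{a\in[0,1)}g(a)$.
   Context: Fix $P>0$, $y_H>y_L\ge 0$, a real number $u$ and $\gamma\in(0,1]$. Let $C:[0,1)\to\mathbb{R}$ satisfy $C(0)=0$, $C$ increasing, strictly convex, twice differentiable, $C(a)\to\infty$ as $a\to1$. Let $\eta:[0,\infty)\to\mathbb{R}$ be strictly convex, increasing, twice differentiable with $\eta(0)=0$, and let $\beta\ge0$ satisfy $\gamma\eta'(\beta)=1$ (assumed to exist). For $a\in[0,1)$ define $w_L^*(a)=\max\{0,u-aC'(a)+C(a)\}$, $w_H^*(a)=w_L^*(a)+C'(a)$, $b_i^*(a)=\min\{\beta,w_i^*(a)\}$ for $i\in\{H,L\}$, and $g(a)=a\,(Py_H-w_H^*(a)+b_H^*(a)-\gamma\eta(b_H^*(a)))+(1-a)\,(Py_L-w_L^*(a)+b_L^*(a)-\gamma\eta(b_L^*(a)))$. (These are the optimal wages and thefts inducing effort $a$ in the one-shot wage-theft principal–agent problem, and $g(a)$ is the employer's resulting profit.) *)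

theory Defs
  imports "HOL-Analysis.Analysis"
begin

definition strictly_convex_on :: "real set \<Rightarrow> (real \<Rightarrow> real) \<Rightarrow> bool" where
  "strictly_convex_on S f \<longleftrightarrow>
     (\<forall>x\<in>S. \<forall>y\<in>S. \<forall>t::real. x \<noteq> y \<and> 0 < t \<and> t < 1 \<longrightarrow>
        f ((1 - t) * x + t * y) < (1 - t) * f x + t * f y)"

text \<open>Optimal wages and thefts inducing effort a; C' is the derivative of C.\<close>
definition wL :: "(real \<Rightarrow> real) \<Rightarrow> (real \<Rightarrow> real) \<Rightarrow> real \<Rightarrow> real \<Rightarrow> real" where
  "wL C C' u a = max 0 (u - a * C' a + C a)"

definition wH :: "(real \<Rightarrow> real) \<Rightarrow> (real \<Rightarrow> real) \<Rightarrow> real \<Rightarrow> real \<Rightarrow> real" where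
  "wH C C' u a = wL C C' u a + C' a"

definition theft :: "real \<Rightarrow> real \<Rightarrow> real" where
  "theft \<beta> w = min \<beta> w"

definition profit_g ::
  "real \<Rightarrow> real \<Rightarrow> real \<Rightarrow> real \<Rightarrow> real \<Rightarrow> real \<Rightarrow> (real \<Rightarrow> real) \<Rightarrow> (real \<Rightarrow> real)
     \<Rightarrow> (real \<Rightarrow> real) \<Rightarrow> real \<Rightarrow> real" where
  "profit_g P yH yL u \<gamma> \<beta> C C' \<eta> a =
     a * (P * yH - wH C C' u a + theft \<beta> (wH C C' u a) - \<gamma> * \<eta> (theft \<beta> (wH C C' u a)))
     + (1 - a) * (P * yL - wL C C' u a + theft \<beta> (wL C C' u a) - \<gamma> * \<eta> (theft \<beta> (wL C C' u a)))"

end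

theory Submission
  imports Defs
begin

theorem proposition3:
  fixes P yH yL u \<gamma> \<beta> :: real
    and C C' C'' \<eta> \<eta>' \<eta>'' :: "real \<Rightarrow> real"
  assumes P: "P > 0"
    and y: "yH > yL" "yL \<ge> 0"
    and gam: "0 < \<gamma>" "\<gamma> \<le> 1"
    and C0: "C 0 = 0"
    and Cmono: "mono_on {0..<1} C"
    and Cconv: "strictly_convex_on {0..<1} C"
    and C'_deriv: "\<And>a. a \<in> {0..<1} \<Longrightarrow> (C has_real_derivative C' a) (at a within {0..<1})"
    and C''_deriv: "\<And>a. a \<in> {0..<1} \<Longrightarrow> (C' has_real_derivative C'' a) (at a within {0..<1})"
    and Clim: "filterlim C at_top (at_left 1)"
    and eta0: "\<eta> 0 = 0"
    and eta_mono: "mono_on {0..} \<eta>"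
    and eta_conv: "strictly_convex_on {0..} \<eta>"
    and eta'_deriv: "\<And>x. x \<in> {0..} \<Longrightarrow> (\<eta> has_real_derivative \<eta>' x) (at x within {0..})"
    and eta''_deriv: "\<And>x. x \<in> {0..} \<Longrightarrow> (\<eta>' has_real_derivative \<eta>'' x) (at x within {0..})"
    and beta: "\<beta> \<ge> 0" "\<gamma> * \<eta>' \<beta> = 1"
  shows "\<exists>a\<^sub>0\<in>{0..<1}. \<forall>a\<in>{0..<1}.
           profit_g P yH yL u \<gamma> \<beta> C C' \<eta> a \<le> profit_g P yH yL u \<gamma> \<beta> C C' \<eta> a\<^sub>0"
  proof -
  define S where "S = {0..<(1::real)}"
  have Ccont: "continuous_on S C"
    unfolding S_def using C'_deriv
    by (metis DERIV_continuous continuous_on_eq_continuous_within)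
  have C'cont: "continuous_on S C'"
    unfolding S_def using C''_deriv
    by (metis DERIV_continuous continuous_on_eq_continuous_within)
  have etacont: "continuous_on {0..} \<eta>"
    using eta'_deriv
    by (metis DERIV_continuous continuous_on_eq_continuous_within)
  have C'nn: "C' a \<ge> 0" if a: "a \<in> S" for a
  proof -
    have lim: "((\<lambda>y. (C y - C a) / (y - a)) \<longlongrightarrow> C' a) (at a within S)"
      using C'_deriv[of a] a unfolding S_def has_field_derivative_iff by auto
    have nt: "\<not> trivial_limit (at a within S)"
      using a unfolding S_def trivial_limit_within by auto
    have ev: "eventually (\<lambda>y. (C y - C a) / (y - a) \<ge> 0) (at a within S)"
      unfolding eventually_at_filter
    proof (rule always_eventually, intro allI impI)
      fix y assume y: "y \<noteq> a" "y \<in> S"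
      show "(C y - C a) / (y - a) \<ge> 0"
      proof (cases "y < a")
        case True
        then have "C y \<le> C a" using Cmono y a unfolding S_def mono_on_def by auto
        then show ?thesis using True by (simp add: divide_nonpos_neg)
      next
        case False
        then have "C a \<le> C y" using Cmono y a unfolding S_def mono_on_def by auto
        then show ?thesis using False y by simp
      qed
    qed
    show ?thesis using tendsto_lowerbound[OF lim ev nt] .
  qed
  define wl where "wl = (\<lambda>a. wL C C' u a)"
  define wh where "wh = (\<lambda>a. wH C C' u a)"
  have wl_nn: "wl a \<ge> 0" for a unfolding wl_def wL_def by simp
  have wh_nn: "wh a \<ge> 0" if "a \<in> S" for a
    using wl_nn[of a] C'nn[OF that] unfolding wh_def wH_def wl_def by simp
  have wl_cont: "continuous_on S wl"
    unfolding wl_def wL_def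
    by (intro continuous_intros Ccont C'cont)
  have wh_cont: "continuous_on S wh"
    unfolding wh_def wH_def
    using wl_cont C'cont unfolding wl_def by (intro continuous_intros)
  define g where "g = profit_g P yH yL u \<gamma> \<beta> C C' \<eta>"
  have g_eq: "g = (\<lambda>a. a * (P * yH - wh a + min \<beta> (wh a) - \<gamma> * \<eta> (min \<beta> (wh a)))
     + (1 - a) * (P * yL - wl a + min \<beta> (wl a) - \<gamma> * \<eta> (min \<beta> (wl a))))"
    unfolding g_def profit_g_def wh_def wl_def theft_def by (rule ext) simp
  have eh: "continuous_on S (\<lambda>a. \<eta> (min \<beta> (wh a)))"
    by (rule continuous_on_compose2[OF etacont]) (use wh_nn beta(1) in \<open>auto intro!: continuous_intros wh_cont\<close>)
  have el: "continuous_on S (\<lambda>a. \<eta> (min \<beta> (wl a)))"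
    by (rule continuous_on_compose2[OF etacont]) (use wl_nn beta(1) in \<open>auto intro!: continuous_intros wl_cont\<close>)
  have gcont: "continuous_on S g"
    unfolding g_eq using eh el wh_cont wl_cont by (intro continuous_intros) auto
  have fbound: "min \<beta> w - \<gamma> * \<eta> (min \<beta> w) \<le> \<beta>" if "w \<ge> 0" for w
  proof -
    have "\<eta> (min \<beta> w) \<ge> \<eta> 0"
      using eta_mono that beta(1) unfolding mono_on_def by auto
    then have "\<gamma> * \<eta> (min \<beta> w) \<ge> 0" using eta0 gam by simp
    moreover have "min \<beta> w \<le> \<beta>" by simp
    ultimately show ?thesis using beta(1) by linarith
  qed
  have gbound: "g a \<le> P * yH + \<beta> - u - C a" if a: "a \<in> S" for a
  proof -
    have a01: "0 \<le> a" "a \<le> 1" using a unfolding S_def by auto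
    have X: "P * yH - wh a + min \<beta> (wh a) - \<gamma> * \<eta> (min \<beta> (wh a)) \<le> P * yH - wh a + \<beta>"
      using fbound[OF wh_nn[OF a]] by linarith
    have Y: "P * yL - wl a + min \<beta> (wl a) - \<gamma> * \<eta> (min \<beta> (wl a)) \<le> P * yH - wl a + \<beta>"
    proof -
      have "P * yL \<le> P * yH" using P y by simp
      then show ?thesis using fbound[OF wl_nn[of a]] by linarith
    qed
    have ga: "g a = a * (P * yH - wh a + min \<beta> (wh a) - \<gamma> * \<eta> (min \<beta> (wh a)))
     + (1 - a) * (P * yL - wl a + min \<beta> (wl a) - \<gamma> * \<eta> (min \<beta> (wl a)))"
      unfolding g_eq by (rule refl)
    have a1: "0 \<le> 1 - a" using a01 by simp
    have "g a \<le> a * (P * yH - wh a + \<beta>) + (1 - a) * (P * yH - wl a + \<beta>)"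
      unfolding ga using mult_left_mono[OF X a01(1)] mult_left_mono[OF Y a1] by linarith
    also have "\<dots> = P * yH + \<beta> - (wl a + a * C' a)"
      unfolding wh_def wH_def wl_def by (simp add: algebra_simps)
    also have "\<dots> \<le> P * yH + \<beta> - u - C a"
    proof -
      have "wl a \<ge> u - a * C' a + C a" unfolding wl_def wL_def by (rule max.cobounded2)
      then show ?thesis by linarith
    qed
    finally show ?thesis .
  qed
  have "eventually (\<lambda>a. C a \<ge> P * yH + \<beta> - u - g 0 + 1) (at_left 1)"
    using Clim unfolding filterlim_at_top by auto
  moreover have "eventually (\<lambda>a. a \<in> {0<..<1}) (at_left (1::real))"
    by (rule eventually_at_left_real) simp
  ultimately have "eventually (\<lambda>a. a \<in> {0<..<1} \<and> C a \<ge> P * yH + \<beta> - u - g 0 + 1) (at_left (1::real))"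
    by (rule eventually_conj[rotated])
  then obtain b where b: "b < 1" "\<And>y. b < y \<Longrightarrow> y < 1 \<Longrightarrow> y \<in> {0<..<1} \<and> C y \<ge> P * yH + \<beta> - u - g 0 + 1"
    unfolding eventually_at_left[of 0 "1::real", OF zero_less_one] by blast
  define d where "d = max 0 b"
  have d: "0 \<le> d" "d < 1" using b(1) unfolding d_def by auto
  have big: "g a < g 0" if "d < a" "a < 1" for a
  proof -
    have "a \<in> S" using that d unfolding S_def by auto
    moreover have "C a \<ge> P * yH + \<beta> - u - g 0 + 1" using b(2)[of a] that unfolding d_def by auto
    ultimately show ?thesis using gbound[of a] by linarith
  qed
  have "continuous_on {0..d} g" using gcont by (rule continuous_on_subset) (use d in \<open>auto simp: S_def\<close>)
  then obtain a0 where a0: "a0 \<in> {0..d}" "\<And>y. y \<in> {0..d} \<Longrightarrow> g y \<le> g a0"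
    using continuous_attains_sup[of "{0..d}" g] d by auto
  show ?thesis
  proof (rule bexI[of _ a0])
    show "a0 \<in> {0..<1}" using a0(1) d by auto
    show "\<forall>a\<in>{0..<1}. profit_g P yH yL u \<gamma> \<beta> C C' \<eta> a \<le> profit_g P yH yL u \<gamma> \<beta> C C' \<eta> a0"
    proof
      fix a :: real assume a: "a \<in> {0..<1}"
      show "profit_g P yH yL u \<gamma> \<beta> C C' \<eta> a \<le> profit_g P yH yL u \<gamma> \<beta> C C' \<eta> a0"
      proof (cases "a \<le> d")
        case True then show ?thesis using a0(2)[of a] a unfolding g_def by auto
      next
        case False then have "g a < g 0" using big a by auto
        also have "g 0 \<le> g a0" using a0(2)[of 0] d by auto
        finally show ?thesis unfolding g_def by simp
      qed
    qed
  qed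
qed

end
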